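(* Let $A\in\mathbb R^{n\times n}$ be Hurwitz and consider a subsystem whose measurement output is its full state, $y=x$, with $G_{yu}(s)=(sI-A)^{-1}B$ and $G_{yv}(s)=(sI-A)^{-1}L$ (state equation $\dot x=Ax+Bu+Lv$), and with all blocks of the subsystem in $\mathcal{RH}_\infty$. Let $P,\overline P,P^\dagger,\overline P^\dagger$ satisfy $PP^\dagger=I$, $\overline P\,\overline P^\dagger=I$, (C1) $P^\dagger P+\overline P^\dagger\overline P=I_n$, (C2) $PAP^\dagger$ and $\overline PA\overline P^\dagger$ Hurwitz, (C3) $PL=0$ and $\overline PL$ nonsingular, and let $X(s):=P-(sI-PAP^\dagger)^{-1}PA\overline P^\dagger\overline P$. Then a controller $u=Kx$ is an output-rectifying retrofit controller if and only if $K=\hat KX$, where $\hat K$ is a stabilizing controller for $\hat G_{\xi u}(s):=(sI-PAP^\dagger)^{-1}PB$.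
   Context: $\mathcal{RH}_\infty$ denotes the set of stable, proper, real rational transfer matrices; a square real matrix is Hurwitz if all eigenvalues have negative real part. For a subsystem with interaction input $v$, control input $u$ and measurement output $y$, a controller $u=Ky$ is an output-rectifying retrofit controller if $K=(I+QG_{yu})^{-1}Q$ for some $Q\in\mathcal{RH}_\infty$ with $Q\,G_{yv}=0$. For transfer matrices $H$ and $C$, $C$ is a stabilizing controller for $H$ if the positive feedback loop $y=Hu$, $u=Cy$ is internally stable. *)

theory Defs
  imports "HOL-Computational_Algebra.Fraction_Field" "HOL-Computational_Algebra.Polynomial"
    "Jordan_Normal_Form.Char_Poly"
begin

text \<open>Real rational functions in s: the fraction field of real polynomials.
  Transfer matrices are matrices over this field.\<close>

type_synonym rfun = "real poly fract"
type_synonym tmat = "rfun mat"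

definition svar :: rfun where "svar = Fract [:0, 1:] 1"
definition rconst :: "real \<Rightarrow> rfun" where "rconst r = Fract [:r:] 1"

definition cmat :: "real mat \<Rightarrow> tmat" where "cmat M = map_mat rconst M"

definition RH_inf_scalar :: "rfun \<Rightarrow> bool" where
  "RH_inf_scalar f \<longleftrightarrow> (\<exists>p q. q \<noteq> 0 \<and> f = Fract p q \<and> degree p \<le> degree q \<and>
      (\<forall>z::complex. poly (map_poly complex_of_real q) z = 0 \<longrightarrow> Re z < 0))"

definition RH_inf :: "tmat \<Rightarrow> bool" where
  "RH_inf G \<longleftrightarrow> (\<forall>i < dim_row G. \<forall>j < dim_col G. RH_inf_scalar (G $$ (i, j)))"

definition hurwitz :: "real mat \<Rightarrow> bool" where
  "hurwitz A \<longleftrightarrow> square_mat A \<and>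
     (\<forall>l. eigenvalue (map_mat complex_of_real A) l \<longrightarrow> Re l < 0)"

definition minv :: "'a :: field mat \<Rightarrow> 'a mat" where
  "minv M = (SOME B. B \<in> carrier_mat (dim_row M) (dim_row M) \<and>
                     M * B = 1\<^sub>m (dim_row M) \<and> B * M = 1\<^sub>m (dim_row M))"

definition resolvent :: "real mat \<Rightarrow> tmat" where
  "resolvent M = minv (svar \<cdot>\<^sub>m 1\<^sub>m (dim_row M) - cmat M)"

definition output_rectifying_retrofit :: "tmat \<Rightarrow> tmat \<Rightarrow> tmat \<Rightarrow> bool" where
  "output_rectifying_retrofit Gyu Gyv K \<longleftrightarrow>
     (\<exists>Q. Q \<in> carrier_mat (dim_col Gyu) (dim_row Gyu) \<and> RH_inf Q \<and> Q * Gyv = 0\<^sub>m (dim_col Gyu) (dim_col Gyv) \<and>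
          invertible_mat (1\<^sub>m (dim_col Gyu) + Q * Gyu) \<and>
          K = minv (1\<^sub>m (dim_col Gyu) + Q * Gyu) * Q)"

text \<open>C is a stabilizing controller for H (H : p x m, C : m x p) in the positive feedback
  loop y = H u + w1, u = C y + w2: the map (w1,w2) to (y,u), i.e. the inverse of
  [[I, -H], [-C, I]], exists and lies in RH-infinity.\<close>
definition stabilizing :: "tmat \<Rightarrow> tmat \<Rightarrow> bool" where
  "stabilizing H C \<longleftrightarrow> C \<in> carrier_mat (dim_col H) (dim_row H) \<and>
     (let T = four_block_mat (1\<^sub>m (dim_row H)) (- H) (- C) (1\<^sub>m (dim_col H))
      in invertible_mat T \<and> RH_inf (minv T))"

end

theory Submission
  imports Defs "Subresultants.More_Homomorphisms"
begin


interpretation cpr: map_poly_comm_ring_hom "of_real :: real \<Rightarrow> complex" ..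

lemma cpoly_mult: "map_poly complex_of_real (p*q) = map_poly complex_of_real p * map_poly complex_of_real q"
  by (rule cpr.hom_mult)

lemma RHs_add: assumes "RH_inf_scalar f" "RH_inf_scalar g" shows "RH_inf_scalar (f+g)"
proof -
  from assms obtain p1 q1 p2 q2 where a: "q1 \<noteq> 0" "f = Fract p1 q1" "degree p1 \<le> degree q1"
    "\<And>z. poly (map_poly complex_of_real q1) z = 0 \<Longrightarrow> Re z < 0"
    and b: "q2 \<noteq> 0" "g = Fract p2 q2" "degree p2 \<le> degree q2"
    "\<And>z. poly (map_poly complex_of_real q2) z = 0 \<Longrightarrow> Re z < 0"
    unfolding RH_inf_scalar_def by metis
  have e: "f + g = Fract (p1*q2 + p2*q1) (q1*q2)" using a b by (simp add: add_fract)
  have d: "degree (q1*q2) = degree q1 + degree q2" using a b by (simp add: degree_mult_eq)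
  have h1: "degree (p1*q2) \<le> degree q1 + degree q2" using degree_mult_le[of p1 q2] a(3) by linarith
  have h2: "degree (p2*q1) \<le> degree q1 + degree q2" using degree_mult_le[of p2 q1] b(3) by linarith
  have "degree (p1*q2 + p2*q1) \<le> degree q1 + degree q2" by (rule degree_add_le[OF h1 h2])
  then show ?thesis unfolding RH_inf_scalar_def
    using a b d e by (intro exI[of _ "p1*q2 + p2*q1"] exI[of _ "q1*q2"]) (auto simp: cpoly_mult)
qed

lemma RHs_mult: assumes "RH_inf_scalar f" "RH_inf_scalar g" shows "RH_inf_scalar (f*g)"
proof -
  from assms obtain p1 q1 p2 q2 where a: "q1 \<noteq> 0" "f = Fract p1 q1" "degree p1 \<le> degree q1"
    "\<And>z. poly (map_poly complex_of_real q1) z = 0 \<Longrightarrow> Re z < 0"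
    and b: "q2 \<noteq> 0" "g = Fract p2 q2" "degree p2 \<le> degree q2"
    "\<And>z. poly (map_poly complex_of_real q2) z = 0 \<Longrightarrow> Re z < 0"
    unfolding RH_inf_scalar_def by metis
  have e: "f * g = Fract (p1*p2) (q1*q2)" using a b by (simp add: mult_fract)
  have d: "degree (q1*q2) = degree q1 + degree q2" using a b by (simp add: degree_mult_eq)
  have "degree (p1*p2) \<le> degree q1 + degree q2"
    by (rule order.trans[OF degree_mult_le]; insert a b; simp)
  then show ?thesis unfolding RH_inf_scalar_def
    using a b d e by (intro exI[of _ "p1*p2"] exI[of _ "q1*q2"]) (auto simp: cpoly_mult)
qed

lemma RHs_uminus: assumes "RH_inf_scalar f" shows "RH_inf_scalar (-f)"
  using assms unfolding RH_inf_scalar_def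
  by (metis degree_minus minus_fract)

lemma RHs_const: "RH_inf_scalar (Fract [:c:] 1)"
  unfolding RH_inf_scalar_def by (intro exI[of _ "[:c:]"] exI[of _ 1]) auto

lemma RHs_zero: "RH_inf_scalar 0"
  using RHs_const[of 0] by (simp add: Zero_fract_def)

lemma RHs_diff: "RH_inf_scalar f \<Longrightarrow> RH_inf_scalar g \<Longrightarrow> RH_inf_scalar (f - g)"
  using RHs_add RHs_uminus by (metis diff_conv_add_uminus)

lemma RHs_sum: "(\<And>i. i \<in> I \<Longrightarrow> RH_inf_scalar (f i)) \<Longrightarrow> RH_inf_scalar (sum f I)"
proof (induction I rule: infinite_finite_induct)
  case (infinite A) then show ?case by (simp add: RHs_zero)
next
  case empty then show ?case by (simp add: RHs_zero)
next
  case (insert x F) then show ?case by (simp add: RHs_add)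
qed



lemma minv_eq: assumes M: "M \<in> carrier_mat k k" and B: "B \<in> carrier_mat k k"
  and MB: "M * B = 1\<^sub>m k" and BM: "B * M = 1\<^sub>m k" shows "minv M = B"
proof -
  let ?P = "\<lambda>B. B \<in> carrier_mat k k \<and> M * B = 1\<^sub>m k \<and> B * M = 1\<^sub>m k"
  have "?P B" using assms by auto
  hence P: "?P (SOME B. ?P B)" by (rule someI)
  define B' where "B' = (SOME B. ?P B)"
  have B': "B' \<in> carrier_mat k k" "B' * M = 1\<^sub>m k" using P unfolding B'_def by auto
  have "B' = B' * (M * B)" using MB B' by simp
  also have "\<dots> = (B' * M) * B" using B' M B by (metis assoc_mult_mat)
  also have "\<dots> = B" using B' B by simp
  finally have "B' = B" .
  thus ?thesis unfolding minv_def B'_def using M by simp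
qed

lemma minv_props: assumes "invertible_mat M" "M \<in> carrier_mat k k"
  shows "minv M \<in> carrier_mat k k" "M * minv M = 1\<^sub>m k" "minv M * M = 1\<^sub>m k"
proof -
  from assms obtain B where "M * B = 1\<^sub>m k" "B * M = 1\<^sub>m (dim_row B)"
    unfolding invertible_mat_def inverts_mat_def by auto
  moreover then have B: "B \<in> carrier_mat k k" using assms(2)
    by (metis carrier_matD(1) carrier_matD(2) carrier_matI index_mult_mat(2) index_mult_mat(3) index_one_mat(2) index_one_mat(3))
  ultimately have "minv M = B" using minv_eq assms(2) by auto
  thus "minv M \<in> carrier_mat k k" "M * minv M = 1\<^sub>m k" "minv M * M = 1\<^sub>m k"
    using B \<open>M * B = 1\<^sub>m k\<close> \<open>B * M = 1\<^sub>m (dim_row B)\<close> by auto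
qed

lemma invertible_by: assumes "M \<in> carrier_mat k k" "B \<in> carrier_mat k k" "M * B = 1\<^sub>m k" "B * M = 1\<^sub>m k"
  shows "invertible_mat M"
  using assms unfolding invertible_mat_def inverts_mat_def square_mat.simps by (intro conjI exI[of _ B]) auto

lemma tf_svar: "svar = to_fract [:0,1:]" by (simp add: svar_def to_fract_def)
lemma tf_rconst: "rconst r = to_fract [:r:]" by (simp add: rconst_def to_fract_def)

lemma D_eq: assumes M: "M \<in> carrier_mat k k"
  shows "svar \<cdot>\<^sub>m 1\<^sub>m k - cmat M = map_mat to_fract (char_poly_matrix M)"
  by (rule eq_matI) (insert M, auto simp: char_poly_matrix_def cmat_def tf_svar tf_rconst
     simp flip: to_fract_hom.hom_add to_fract_hom.hom_mult to_fract_hom.hom_uminus to_fract_hom.hom_minus)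

lemma mat_delete_map: "mat_delete (map_mat f A) i j = map_mat f (mat_delete A i j)"
  by (rule eq_matI) (auto simp: mat_delete_def)

lemma cofactor_map: "cofactor (map_mat to_fract C) i j = to_fract (cofactor C i j)"
  unfolding cofactor_def mat_delete_map to_fract_hom.hom_det to_fract_hom.hom_mult to_fract_hom.hom_power
    to_fract_hom.hom_uminus to_fract_hom.hom_one ..

lemma degree_det_le: assumes A: "A \<in> carrier_mat l l"
  and d: "\<And>i j. i < l \<Longrightarrow> j < l \<Longrightarrow> degree (A $$ (i,j)) \<le> (1::nat)"
  shows "degree (det A) \<le> l"
  unfolding det_def'[OF A]
proof (rule degree_sum_le)
  show "finite {p. p permutes {0..<l}}" by (simp add: finite_permutations)
  fix p assume "p \<in> {p. p permutes {0..<l}}"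
  hence p: "p permutes {0..<l}" by simp
  have "degree (\<Prod>i = 0..<l. A $$ (i, p i)) \<le> sum (degree \<circ> (\<lambda>i. A $$ (i, p i))) {0..<l}"
    by (rule degree_prod_sum_le) simp
  also have "\<dots> \<le> sum (\<lambda>_. 1) {0..<l}"
    by (rule sum_mono) (use p d permutes_in_image in auto)
  finally show "degree (signof p * (\<Prod>i = 0..<l. A $$ (i, p i))) \<le> l" by simp
qed



lemma resolvent_formula: assumes M: "M \<in> carrier_mat k k"
  shows "resolvent M = mat k k (\<lambda>(i,j). Fract (cofactor (char_poly_matrix M) j i) (char_poly M))"
   and "svar \<cdot>\<^sub>m 1\<^sub>m k - cmat M \<in> carrier_mat k k"
   and "resolvent M \<in> carrier_mat k k"
   and "(svar \<cdot>\<^sub>m 1\<^sub>m k - cmat M) * resolvent M = 1\<^sub>m k"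
   and "resolvent M * (svar \<cdot>\<^sub>m 1\<^sub>m k - cmat M) = 1\<^sub>m k"
proof -
  define C where "C = char_poly_matrix M"
  have C: "C \<in> carrier_mat k k" using M unfolding C_def by simp
  define D where "D = svar \<cdot>\<^sub>m 1\<^sub>m k - cmat M"
  have DC: "D = map_mat to_fract C" unfolding D_def C_def by (rule D_eq[OF M])
  have D: "D \<in> carrier_mat k k" using DC C by simp
  have cp0: "char_poly M \<noteq> 0" using degree_monic_char_poly[OF M] by auto
  have detD: "det D = to_fract (char_poly M)" unfolding DC to_fract_hom.hom_det char_poly_def C_def ..
  hence detD0: "det D \<noteq> 0" using cp0 by simp
  define R where "R = inverse (det D) \<cdot>\<^sub>m adj_mat D"
  have R: "R \<in> carrier_mat k k" unfolding R_def using adj_mat(1)[OF D] by simp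
  have DR: "D * R = 1\<^sub>m k" unfolding R_def
    using mult_smult_distrib[OF D adj_mat(1)[OF D]] adj_mat(2)[OF D] detD0
    by (auto intro!: eq_matI)
  have RD: "R * D = 1\<^sub>m k" unfolding R_def
    using mult_smult_assoc_mat[OF adj_mat(1)[OF D] D] adj_mat(3)[OF D] detD0
    by (auto intro!: eq_matI)
  have res: "resolvent M = R" unfolding resolvent_def
    using minv_eq[OF _ R DR RD] D M unfolding D_def by simp
  show "resolvent M = mat k k (\<lambda>(i,j). Fract (cofactor (char_poly_matrix M) j i) (char_poly M))"
    unfolding res R_def adj_mat_def detD DC
    by (rule eq_matI) (insert C, auto simp: cofactor_map C_def to_fract_def char_poly_def)
  show "svar \<cdot>\<^sub>m 1\<^sub>m k - cmat M \<in> carrier_mat k k" using D D_def by simp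
  show "resolvent M \<in> carrier_mat k k" using R res by simp
  show "(svar \<cdot>\<^sub>m 1\<^sub>m k - cmat M) * resolvent M = 1\<^sub>m k" using DR res D_def by simp
  show "resolvent M * (svar \<cdot>\<^sub>m 1\<^sub>m k - cmat M) = 1\<^sub>m k" using RD res D_def by simp
qed

lemma hurwitz_roots: assumes h: "hurwitz M" and M: "M \<in> carrier_mat k k"
  and z: "poly (map_poly complex_of_real (char_poly M)) z = 0" shows "Re z < 0"
proof -
  have "char_poly (map_mat complex_of_real M) = map_poly complex_of_real (char_poly M)"
    by (rule of_real_hom.char_poly_hom[OF M])
  hence "eigenvalue (map_mat complex_of_real M) z"
    using eigenvalue_root_char_poly[of "map_mat complex_of_real M" k z] M z by simp
  thus ?thesis using h unfolding hurwitz_def by auto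
qed

lemma resolvent_RH: assumes h: "hurwitz M" shows "RH_inf (resolvent M)"
proof -
  define k where "k = dim_row M"
  have M: "M \<in> carrier_mat k k" using h unfolding hurwitz_def k_def by auto
  have cp0: "char_poly M \<noteq> 0" and dcp: "degree (char_poly M) = k"
    using degree_monic_char_poly[OF M] by auto
  define C where "C = char_poly_matrix M"
  have C: "C \<in> carrier_mat k k" using M unfolding C_def by simp
  have Cd: "degree (C $$ (i,j)) \<le> 1" if "i < k" "j < k" for i j
  proof -
    have e: "C $$ (i,j) = (if i = j then [:0,1:] else 0) + [:-M$$(i,j):]"
      using that M by (simp add: C_def char_poly_matrix_def)
    show ?thesis unfolding e by (cases "i = j") auto
  qed
  have cof: "degree (cofactor C i j) \<le> k" if "i < k" "j < k" for i j
  proof -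
    have "degree (det (mat_delete C i j)) \<le> k - 1"
    proof (rule degree_det_le)
      show "mat_delete C i j \<in> carrier_mat (k-1) (k-1)" using mat_delete_carrier[OF C] .
      fix a b assume "a < k - 1" "b < k - 1"
      hence "(if a < i then a else Suc a) < k" "(if b < j then b else Suc b) < k" by auto
      thus "degree (mat_delete C i j $$ (a, b)) \<le> 1" using C Cd \<open>a < k - 1\<close> \<open>b < k - 1\<close>
        unfolding mat_delete_def by simp
    qed
    moreover have "degree ((-1 :: real poly)^(i+j)) = 0"
      using degree_power_le[of "-1 :: real poly" "i+j"] by simp
    ultimately show ?thesis unfolding cofactor_def
      using degree_mult_le[of "(-1 :: real poly)^(i+j)" "det (mat_delete C i j)"] by linarith
  qed
  have R: "resolvent M \<in> carrier_mat k k" by (rule resolvent_formula(3)[OF M])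
  show ?thesis unfolding RH_inf_def
  proof (intro allI impI)
    fix i j assume i: "i < dim_row (resolvent M)" and j: "j < dim_col (resolvent M)"
    hence ij: "i < k" "j < k" using R by auto
    have e: "resolvent M $$ (i,j) = Fract (cofactor C j i) (char_poly M)"
      unfolding resolvent_formula(1)[OF M] C_def using ij by simp
    show "RH_inf_scalar (resolvent M $$ (i, j))" unfolding RH_inf_scalar_def e
      by (intro exI[of _ "cofactor C j i"] exI[of _ "char_poly M"] conjI)
        (use cp0 cof[OF ij(2,1)] dcp hurwitz_roots[OF h M] in auto)
  qed
qed



interpretation rc: comm_ring_hom rconst
proof
  fix x y :: real
  show "rconst (x + y) = rconst x + rconst y"
    unfolding tf_rconst by (simp flip: to_fract_hom.hom_add)
  show "rconst (x * y) = rconst x * rconst y"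
    unfolding tf_rconst by (simp flip: to_fract_hom.hom_mult)
  show "rconst 1 = 1" unfolding tf_rconst by simp
  show "rconst 0 = 0" unfolding tf_rconst by simp
qed

lemma rconst_0_iff: "rconst x = 0 \<longleftrightarrow> x = 0"
  unfolding tf_rconst by simp

lemma cmat_dims[simp]: "dim_row (cmat M) = dim_row M" "dim_col (cmat M) = dim_col M"
  unfolding cmat_def by auto

lemma cmat_carrier[simp]: "cmat M \<in> carrier_mat a b \<longleftrightarrow> M \<in> carrier_mat a b"
  unfolding carrier_mat_def by simp

lemma cmat_mult: "A \<in> carrier_mat a b \<Longrightarrow> B \<in> carrier_mat b c \<Longrightarrow> cmat (A * B) = cmat A * cmat B"
  unfolding cmat_def by (rule rc.mat_hom_mult)

lemma cmat_add: "A \<in> carrier_mat a b \<Longrightarrow> B \<in> carrier_mat a b \<Longrightarrow> cmat (A + B) = cmat A + cmat B"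
  unfolding cmat_def by (rule eq_matI) (auto simp: rc.hom_add)

lemma cmat_minus: "A \<in> carrier_mat a b \<Longrightarrow> B \<in> carrier_mat a b \<Longrightarrow> cmat (A - B) = cmat A - cmat B"
  unfolding cmat_def by (rule eq_matI) (auto simp: rc.hom_minus)

lemma cmat_zero[simp]: "cmat (0\<^sub>m a b) = 0\<^sub>m a b"
  unfolding cmat_def by (rule eq_matI) auto

lemma cmat_one[simp]: "cmat (1\<^sub>m a) = 1\<^sub>m a"
  unfolding cmat_def by (rule eq_matI) auto

lemma cmat_det: "det (cmat M) = rconst (det M)"
  unfolding cmat_def by (rule rc.hom_det)

lemma RH_entry: "RH_inf G \<Longrightarrow> i < dim_row G \<Longrightarrow> j < dim_col G \<Longrightarrow> RH_inf_scalar (G $$ (i,j))"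
  unfolding RH_inf_def by auto

lemma RH_mult: assumes "RH_inf A" "RH_inf B" "dim_col A = dim_row B" shows "RH_inf (A * B)"
  unfolding RH_inf_def
proof (intro allI impI)
  fix i j assume i: "i < dim_row (A * B)" and j: "j < dim_col (A * B)"
  have "(A * B) $$ (i,j) = (\<Sum>k \<in> {0..<dim_row B}. A $$ (i,k) * B $$ (k,j))"
    using i j assms(3) by (simp add: scalar_prod_def)
  also have "RH_inf_scalar \<dots>"
    by (rule RHs_sum, rule RHs_mult) (use i j assms in \<open>auto intro: RH_entry\<close>)
  finally show "RH_inf_scalar ((A * B) $$ (i, j))" .
qed

lemma RH_add: assumes "RH_inf A" "RH_inf B" "dim_row A = dim_row B" "dim_col A = dim_col B"
  shows "RH_inf (A + B)"
  using assms unfolding RH_inf_def by (auto intro: RHs_add)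

lemma RH_minus: assumes "RH_inf A" "RH_inf B" "dim_row A = dim_row B" "dim_col A = dim_col B"
  shows "RH_inf (A - B)"
  using assms unfolding RH_inf_def by (auto intro: RHs_diff)

lemma RH_uminus: assumes "RH_inf A" shows "RH_inf (- A)"
  using assms unfolding RH_inf_def by (auto intro: RHs_uminus)

lemma RH_cmat: "RH_inf (cmat M)"
  unfolding RH_inf_def cmat_def rconst_def by (auto intro: RHs_const)

lemma RH_one: "RH_inf (1\<^sub>m k)"
  using RH_cmat[of "1\<^sub>m k"] by simp

lemma RH_four_block: assumes "RH_inf A" "RH_inf B" "RH_inf C" "RH_inf D"
  and c: "A \<in> carrier_mat nr1 nc1" "B \<in> carrier_mat nr1 nc2" "C \<in> carrier_mat nr2 nc1" "D \<in> carrier_mat nr2 nc2"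
  shows "RH_inf (four_block_mat A B C D)"
  unfolding RH_inf_def
proof (intro allI impI)
  fix i j assume i: "i < dim_row (four_block_mat A B C D)" and j: "j < dim_col (four_block_mat A B C D)"
  show "RH_inf_scalar (four_block_mat A B C D $$ (i, j))"
    using i j c assms(1-4) by (auto simp: four_block_mat_def intro!: RH_entry)
qed

lemma RH_split: assumes "RH_inf S" "split_block S a b = (S1, S2, S3, S4)" "a \<le> dim_row S" "b \<le> dim_col S"
  shows "RH_inf S1" "RH_inf S2" "RH_inf S3" "RH_inf S4"
  using assms unfolding split_block_def Let_def RH_inf_def using assms(3,4) by (auto intro!: RH_entry[OF assms(1)])



lemma mat_add_cancel: fixes A :: "'a :: ab_group_add mat" assumes "A \<in> carrier_mat a b" "B \<in> carrier_mat a b" "A + B = B"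
  shows "A = 0\<^sub>m a b"
proof (rule eq_matI)
  fix i j assume ij: "i < dim_row (0\<^sub>m a b)" "j < dim_col (0\<^sub>m a b)"
  have "(A + B) $$ (i,j) = B $$ (i,j)" by (simp only: assms(3))
  hence "A $$ (i,j) + B $$ (i,j) = B $$ (i,j)" using ij assms(1,2) by simp
  thus "A $$ (i,j) = 0\<^sub>m a b $$ (i,j)" using ij by simp
qed (use assms in auto)

lemma mat_vec_zero: "A \<in> carrier_mat a b \<Longrightarrow> A *\<^sub>v 0\<^sub>v b = 0\<^sub>v a"
  by (rule eq_vecI) (auto simp: scalar_prod_def)

lemma mat_zero_vec: "v \<in> carrier_vec b \<Longrightarrow> 0\<^sub>m a b *\<^sub>v v = 0\<^sub>v a"
  by (rule eq_vecI) (auto simp: scalar_prod_def)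

lemma cancel_right_det: fixes N :: "'a :: field mat"
  assumes N: "N \<in> carrier_mat k k" and d: "det N \<noteq> 0" and Y: "Y \<in> carrier_mat a k"
  and YN: "Y * N = 0\<^sub>m a k" shows "Y = 0\<^sub>m a k"
proof -
  have "Y * N * adj_mat N = 0\<^sub>m a k" using YN adj_mat(1)[OF N] by simp
  also have "Y * N * adj_mat N = Y * (det N \<cdot>\<^sub>m 1\<^sub>m k)"
    using Y N adj_mat[OF N] by simp
  also have "\<dots> = det N \<cdot>\<^sub>m Y" using Y by (simp add: mult_smult_distrib[OF Y one_carrier_mat])
  finally have e: "det N \<cdot>\<^sub>m Y = 0\<^sub>m a k" .
  show ?thesis
  proof (rule eq_matI)
    fix i j assume ij: "i < dim_row (0\<^sub>m a k)" "j < dim_col (0\<^sub>m a k)"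
    have "(det N \<cdot>\<^sub>m Y) $$ (i,j) = 0" using e ij by simp
    thus "Y $$ (i,j) = 0\<^sub>m a k $$ (i,j)" using d ij Y by simp
  qed (use Y in auto)
qed

lemma mad': assumes "dim_col A = dim_row B" "dim_row B = dim_row C" "dim_col B = dim_col C"
  shows "A * (B + C) = A * B + A * (C :: 'a :: semiring_0 mat)"
proof -
  have "A \<in> carrier_mat (dim_row A) (dim_col A)" "B \<in> carrier_mat (dim_col A) (dim_col B)"
    "C \<in> carrier_mat (dim_col A) (dim_col B)" by (auto intro!: carrier_matI simp: assms)
  thus ?thesis by (rule mult_add_distrib_mat)
qed
lemma amd': assumes "dim_row A = dim_row B" "dim_col A = dim_col B" "dim_col A = dim_row C"
  shows "(A + B) * C = A * C + B * (C :: 'a :: semiring_0 mat)"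
proof -
  have "A \<in> carrier_mat (dim_row A) (dim_col A)" "B \<in> carrier_mat (dim_row A) (dim_col A)"
    "C \<in> carrier_mat (dim_col A) (dim_col C)" using assms by (auto intro!: carrier_matI)
  thus ?thesis by (rule add_mult_distrib_mat)
qed
lemma mmd': assumes "dim_col A = dim_row B" "dim_row B = dim_row C" "dim_col B = dim_col C"
  shows "A * (B - C) = A * B - A * (C :: 'a :: ring mat)"
proof -
  have "A \<in> carrier_mat (dim_row A) (dim_col A)" "B \<in> carrier_mat (dim_col A) (dim_col B)"
    "C \<in> carrier_mat (dim_col A) (dim_col B)" by (auto intro!: carrier_matI simp: assms)
  thus ?thesis by (rule mult_minus_distrib_mat)
qed
lemma smd': assumes "dim_row A = dim_row B" "dim_col A = dim_col B" "dim_col A = dim_row C"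
  shows "(A - B) * C = A * C - B * (C :: 'a :: ring mat)"
proof -
  have "A \<in> carrier_mat (dim_row A) (dim_col A)" "B \<in> carrier_mat (dim_row A) (dim_col A)"
    "C \<in> carrier_mat (dim_col A) (dim_col C)" using assms by (auto intro!: carrier_matI)
  thus ?thesis by (rule minus_mult_distrib_mat)
qed
lemma assoc': assumes "dim_col A = dim_row B" "dim_col B = dim_row C"
  shows "A * B * C = A * (B * (C :: 'a :: semiring_0 mat))"
proof -
  have "A \<in> carrier_mat (dim_row A) (dim_col A)" "B \<in> carrier_mat (dim_col A) (dim_col B)"
    "C \<in> carrier_mat (dim_col B) (dim_col C)" by (auto intro!: carrier_matI simp: assms)
  thus ?thesis by (rule assoc_mult_mat)
qed


lemma four_block_eqD: assumes e: "four_block_mat A B C D = four_block_mat A' B' C' D'"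
  and c: "A \<in> carrier_mat nr1 nc1" "B \<in> carrier_mat nr1 nc2" "C \<in> carrier_mat nr2 nc1" "D \<in> carrier_mat nr2 nc2"
  and c': "A' \<in> carrier_mat nr1 nc1" "B' \<in> carrier_mat nr1 nc2" "C' \<in> carrier_mat nr2 nc1" "D' \<in> carrier_mat nr2 nc2"
  shows "A = A'" "B = B'" "C = C'" "D = D'"
proof -
  have ent: "four_block_mat A B C D $$ (i,j) = four_block_mat A' B' C' D' $$ (i,j)" for i j
    using e by simp
  show "A = A'"
  proof (rule eq_matI)
    fix i j assume "i < dim_row A'" "j < dim_col A'"
    thus "A $$ (i,j) = A' $$ (i,j)" using ent[of i j] c c' by (simp add: four_block_mat_def)
  qed (use c c' in auto)
  show "B = B'"
  proof (rule eq_matI)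
    fix i j assume "i < dim_row B'" "j < dim_col B'"
    thus "B $$ (i,j) = B' $$ (i,j)" using ent[of i "j + nc1"] c c' by (simp add: four_block_mat_def)
  qed (use c c' in auto)
  show "C = C'"
  proof (rule eq_matI)
    fix i j assume "i < dim_row C'" "j < dim_col C'"
    thus "C $$ (i,j) = C' $$ (i,j)" using ent[of "i + nr1" j] c c' by (simp add: four_block_mat_def)
  qed (use c c' in auto)
  show "D = D'"
  proof (rule eq_matI)
    fix i j assume "i < dim_row D'" "j < dim_col D'"
    thus "D $$ (i,j) = D' $$ (i,j)" using ent[of "i + nr1" "j + nc1"] c c' by (simp add: four_block_mat_def)
  qed (use c c' in auto)
qed

lemma minus_eq0: fixes A :: "'a :: ab_group_add mat"
  assumes "A \<in> carrier_mat a b" "B \<in> carrier_mat a b" "A - B = 0\<^sub>m a b" shows "A = B"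
proof (rule eq_matI)
  fix i j assume ij: "i < dim_row B" "j < dim_col B"
  have "(A - B) $$ (i,j) = 0\<^sub>m a b $$ (i,j)" by (simp only: assms(3))
  thus "A $$ (i,j) = B $$ (i,j)" using ij assms(1,2) by simp
qed (use assms in auto)

theorem proposition6:
  fixes A B L P Pb Pd Pbd :: "real mat" and n m p r q :: nat
  assumes A: "A \<in> carrier_mat n n" and B: "B \<in> carrier_mat n m" and L: "L \<in> carrier_mat n p"
    and P: "P \<in> carrier_mat r n" and Pd: "Pd \<in> carrier_mat n r"
    and Pb: "Pb \<in> carrier_mat q n" and Pbd: "Pbd \<in> carrier_mat n q"
    and hurA: "hurwitz A"
    and RH_Gyu: "RH_inf (resolvent A * cmat B)"
    and RH_Gyv: "RH_inf (resolvent A * cmat L)"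
    and inv1: "P * Pd = 1\<^sub>m r" and inv2: "Pb * Pbd = 1\<^sub>m q"
    and C1: "Pd * P + Pbd * Pb = 1\<^sub>m n"
    and C2: "hurwitz (P * A * Pd)" "hurwitz (Pb * A * Pbd)"
    and C3: "P * L = 0\<^sub>m r p" "square_mat (Pb * L)" "det (Pb * L) \<noteq> 0"
  shows "\<forall>K \<in> carrier_mat m n.
     output_rectifying_retrofit (resolvent A * cmat B) (resolvent A * cmat L) K \<longleftrightarrow>
     (\<exists>Khat. stabilizing (resolvent (P * A * Pd) * cmat (P * B)) Khat \<and>
        K = Khat * (cmat P - resolvent (P * A * Pd) * cmat (P * A * Pbd * Pb)))"
proof -
  have qp: "q = p" using C3(2) Pb L by auto
  define Ah where "Ah = P * A * Pd"
  have Ah: "Ah \<in> carrier_mat r r" unfolding Ah_def using P A Pd by auto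
  define R where "R = resolvent A"
  define Rh where "Rh = resolvent Ah"
  define D where "D = svar \<cdot>\<^sub>m 1\<^sub>m n - cmat A"
  define Dh where "Dh = svar \<cdot>\<^sub>m 1\<^sub>m r - cmat Ah"
  note RF = resolvent_formula[OF A, folded R_def D_def]
  note RhF = resolvent_formula[OF Ah, folded Rh_def Dh_def]
  have R: "R \<in> carrier_mat n n" and D: "D \<in> carrier_mat n n" and DR: "D * R = 1\<^sub>m n" and RD: "R * D = 1\<^sub>m n"
    using RF by auto
  have Rh: "Rh \<in> carrier_mat r r" and Dh: "Dh \<in> carrier_mat r r" and DRh: "Dh * Rh = 1\<^sub>m r" and RDh: "Rh * Dh = 1\<^sub>m r"
    using RhF by auto
  define Y where "Y = P * A * Pbd * Pb"
  have Yc: "Y \<in> carrier_mat r n" unfolding Y_def using P A Pbd Pb by auto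
  define G where "G = R * cmat B"
  define W where "W = R * cmat L"
  define Gh where "Gh = Rh * cmat (P * B)"
  define X where "X = cmat P - Rh * cmat Y"
  have G: "G \<in> carrier_mat n m" unfolding G_def using R B by auto
  have W: "W \<in> carrier_mat n p" unfolding W_def using R L by auto
  have Gh: "Gh \<in> carrier_mat r m" unfolding Gh_def using Rh P B by auto
  have X: "X \<in> carrier_mat r n" unfolding X_def using Rh P Yc by auto
  have RHRh: "RH_inf Rh" unfolding Rh_def Ah_def by (rule resolvent_RH[OF C2(1)])
  have RHX: "RH_inf X" unfolding X_def using RHRh Rh P Yc
    by (intro RH_minus RH_cmat RH_mult) auto
  have RHGh: "RH_inf Gh" unfolding Gh_def using RHRh Rh P B
    by (intro RH_mult RH_cmat) auto
  note dims = carrier_matD[OF A] carrier_matD[OF B] carrier_matD[OF L] carrier_matD[OF P]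
    carrier_matD[OF Pd] carrier_matD[OF Pb] carrier_matD[OF Pbd] carrier_matD[OF Ah]
    carrier_matD[OF R] carrier_matD[OF D] carrier_matD[OF Rh] carrier_matD[OF Dh] carrier_matD[OF Yc]
    carrier_matD[OF G] carrier_matD[OF W] carrier_matD[OF Gh] carrier_matD[OF X]
  have PbPd: "Pb * Pd = 0\<^sub>m q r"
  proof -
    have "Pb = Pb * (Pd * P + Pbd * Pb)" using C1 Pb by simp
    also have "\<dots> = Pb * Pd * P + Pb * Pbd * Pb" by (simp add: mad' assoc' dims)
    also have "\<dots> = Pb * Pd * P + Pb" using inv2 Pb by simp
    finally have "Pb * Pd * P + Pb = Pb" by simp
    hence z: "Pb * Pd * P = 0\<^sub>m q n" using Pb Pd P by (intro mat_add_cancel) auto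
    have "Pb * Pd = Pb * Pd * (P * Pd)" using inv1 Pb Pd by simp
    also have "\<dots> = (Pb * Pd * P) * Pd" by (simp add: assoc' dims)
    also have "\<dots> = 0\<^sub>m q r" using z Pd by simp
    finally show ?thesis .
  qed
  have PA: "P * A = Ah * P + Y"
  proof -
    have "P * A = P * A * (Pd * P + Pbd * Pb)" using C1 P A by simp
    also have "\<dots> = P * A * Pd * P + P * A * Pbd * Pb" by (simp add: mad' assoc' dims)
    finally show ?thesis unfolding Ah_def Y_def .
  qed
  have YPd: "Y * Pd = 0\<^sub>m r r" unfolding Y_def using PbPd by (simp add: assoc' dims)
  have cPA: "cmat P * cmat A = cmat Ah * cmat P + cmat Y"
  proof -
    have "cmat P * cmat A = cmat (P * A)" using cmat_mult[OF P A] by simp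
    also have "\<dots> = cmat (Ah * P) + cmat Y" unfolding PA using Ah P Yc by (intro cmat_add) auto
    also have "cmat (Ah * P) = cmat Ah * cmat P" using cmat_mult[OF Ah P] .
    finally show ?thesis .
  qed
  have E1: "cmat P * D = Dh * cmat P - cmat Y"
  proof -
    have l: "cmat P * D = svar \<cdot>\<^sub>m cmat P - (cmat Ah * cmat P + cmat Y)" unfolding D_def
      using mult_smult_distrib[of "cmat P" r n "1\<^sub>m n" n svar] P cPA by (simp add: mmd' dims)
    have rr: "Dh * cmat P = svar \<cdot>\<^sub>m cmat P - cmat Ah * cmat P" unfolding Dh_def
      using mult_smult_assoc_mat[of "1\<^sub>m r" r r "cmat P" n svar] P by (simp add: smd' dims)
    show ?thesis unfolding l rr by (rule eq_matI) (auto simp: dims)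
  qed
  have E2: "X = Rh * (cmat P * D)"
  proof -
    have "Rh * (cmat P * D) = Rh * (Dh * cmat P) - Rh * cmat Y" unfolding E1 by (simp add: mmd' dims)
    also have "Rh * (Dh * cmat P) = cmat P" using RDh by (simp flip: assoc' add: dims)
    finally show ?thesis unfolding X_def by simp
  qed
  have E3: "X * R = Rh * cmat P"
    unfolding E2 using DR by (simp add: assoc' dims)
  have E4: "X * G = Gh"
    unfolding G_def Gh_def using E3 cmat_mult[OF P B] by (simp flip: assoc' add: dims)
  have E5: "X * W = 0\<^sub>m r p"
  proof -
    have PL: "cmat P * cmat L = 0\<^sub>m r p" using cmat_mult[OF P L] C3(1) by simp
    have "X * W = X * R * cmat L" unfolding W_def by (simp add: assoc' dims)
    also have "\<dots> = Rh * (cmat P * cmat L)" unfolding E3 by (simp add: assoc' dims)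
    also have "\<dots> = 0\<^sub>m r p" unfolding PL using Rh by simp
    finally show ?thesis .
  qed
  have E6: "X * cmat Pd = 1\<^sub>m r"
  proof -
    have "X * cmat Pd = cmat P * cmat Pd - Rh * (cmat Y * cmat Pd)" unfolding X_def
      by (simp add: smd' assoc' dims)
    also have "cmat P * cmat Pd = 1\<^sub>m r" using cmat_mult[OF P Pd] inv1 by simp
    also have "cmat Y * cmat Pd = 0\<^sub>m r r" using cmat_mult[OF Yc Pd] YPd by simp
    finally show ?thesis by (auto intro!: eq_matI simp: dims)
  qed
  have E7: "cmat Pd * cmat P + cmat Pbd * cmat Pb = 1\<^sub>m n"
    using cmat_mult[OF Pd P] cmat_mult[OF Pbd Pb] cmat_add[of "Pd * P" n n "Pbd * Pb"] C1 Pd P Pbd Pb by simp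
  have N: "cmat Pb * W \<in> carrier_mat p p" using Pb W qp by auto
  have E8: "det (cmat Pb * W) \<noteq> 0"
  proof
    assume "det (cmat Pb * W) = 0"
    then obtain v where v: "v \<in> carrier_vec p" "v \<noteq> 0\<^sub>v p" "(cmat Pb * W) *\<^sub>v v = 0\<^sub>v p"
      using det_0_iff_vec_prod_zero_field[OF N] by auto
    define w where "w = W *\<^sub>v v"
    have w: "w \<in> carrier_vec n" unfolding w_def using W v by auto
    have w1: "cmat Pb *\<^sub>v w = 0\<^sub>v q" unfolding w_def using v W Pb qp by simp
    have w2: "X *\<^sub>v w = 0\<^sub>v r" unfolding w_def using v W X E5 by (simp flip: assoc_mult_mat_vec add: mat_zero_vec)
    have "w = (cmat Pd * cmat P + cmat Pbd * cmat Pb) *\<^sub>v w" using E7 w by simp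
    also have "\<dots> = cmat Pd *\<^sub>v (cmat P *\<^sub>v w) + cmat Pbd *\<^sub>v (cmat Pb *\<^sub>v w)"
      using w Pd P Pbd Pb by (simp add: add_mult_distrib_mat_vec[of _ n n])
    also have "cmat Pbd *\<^sub>v (cmat Pb *\<^sub>v w) = 0\<^sub>v n" unfolding w1 using Pbd by (simp add: mat_vec_zero)
    finally have w3: "w = cmat Pd *\<^sub>v (cmat P *\<^sub>v w)" using Pd P w by simp
    have "cmat P *\<^sub>v w = (X * cmat Pd) *\<^sub>v (cmat P *\<^sub>v w)" unfolding E6 using P w by simp
    also have "\<dots> = X *\<^sub>v w" using X Pd P w w3 by simp
    finally have w4: "cmat P *\<^sub>v w = 0\<^sub>v r" using w2 by simp
    have w0: "w = 0\<^sub>v n" using w3 w4 Pd by (simp add: mat_vec_zero)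
    have "cmat L *\<^sub>v v = (D * W) *\<^sub>v v"
      unfolding W_def using D R L DR by (simp flip: assoc_mult_mat add: dims)
    also have "\<dots> = D *\<^sub>v w" unfolding w_def using D W v by simp
    finally have "cmat L *\<^sub>v v = 0\<^sub>v n" using w0 D by (simp add: mat_vec_zero)
    hence "cmat (Pb * L) *\<^sub>v v = 0\<^sub>v p" using cmat_mult[OF Pb L] Pb L v qp by (simp add: mat_vec_zero)
    hence "det (cmat (Pb * L)) = 0"
      using det_0_iff_vec_prod_zero_field[of "cmat (Pb * L)" p] v Pb L qp by auto
    thus False using C3(3) by (simp add: cmat_det rconst_0_iff)
  qed
  have cancelN: "Z = 0\<^sub>m a q" if "Z \<in> carrier_mat a q" "Z * (cmat Pb * W) = 0\<^sub>m a q" for Z a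
    using cancel_right_det[OF N E8, of Z a] that qp by simp
  have Qfact: "Q = Q * cmat Pd * X" if Q: "Q \<in> carrier_mat m n" and QW: "Q * W = 0\<^sub>m m p" for Q
  proof -
    define Z where "Z = Q - Q * cmat Pd * X"
    have Z: "Z \<in> carrier_mat m n" unfolding Z_def using Q Pd X by auto
    have ZPd: "Z * cmat Pd = 0\<^sub>m m r"
    proof -
      have "Z * cmat Pd = Q * cmat Pd - Q * cmat Pd * (X * cmat Pd)" unfolding Z_def
        using Q by (simp add: smd' assoc' dims)
      also have "\<dots> = 0\<^sub>m m r" unfolding E6 using Q Pd by simp
      finally show ?thesis .
    qed
    have ZW: "Z * W = 0\<^sub>m m p"
    proof -
      have "Z * W = Q * W - Q * cmat Pd * (X * W)" unfolding Z_def
        using Q by (simp add: smd' assoc' dims)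
      also have "\<dots> = 0\<^sub>m m p" unfolding E5 QW using Q Pd by simp
      finally show ?thesis .
    qed
    have "Z = Z * (cmat Pd * cmat P + cmat Pbd * cmat Pb)" unfolding E7 using Z by simp
    also have "\<dots> = Z * cmat Pd * cmat P + Z * cmat Pbd * cmat Pb" using Z by (simp add: mad' assoc' dims)
    also have "Z * cmat Pd * cmat P = 0\<^sub>m m n" unfolding ZPd using P by simp
    finally have Z1: "Z = 0\<^sub>m m n + Z * cmat Pbd * cmat Pb" .
    have "0\<^sub>m m n + Z * cmat Pbd * cmat Pb = Z * cmat Pbd * cmat Pb" using Z Pbd Pb by simp
    with Z1 have Zeq: "Z = Z * cmat Pbd * cmat Pb" by (rule trans)
    have "Z * W = (Z * cmat Pbd * cmat Pb) * W" using Zeq by (rule arg_cong[where f="\<lambda>M. M * W"])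
    also have "\<dots> = Z * cmat Pbd * (cmat Pb * W)" using Z by (simp add: assoc' dims)
    finally have "Z * cmat Pbd * (cmat Pb * W) = 0\<^sub>m m q" using ZW qp by simp
    moreover have "Z * cmat Pbd \<in> carrier_mat m q" using Z Pbd by simp
    ultimately have ZPbd: "Z * cmat Pbd = 0\<^sub>m m q" using cancelN by blast
    have "Z * cmat Pbd * cmat Pb = 0\<^sub>m m n" unfolding ZPbd using Pb by simp
    with Zeq have "Z = 0\<^sub>m m n" by (rule trans)
    hence "Q - Q * cmat Pd * X = 0\<^sub>m m n" unfolding Z_def .
    thus ?thesis by (intro minus_eq0[of Q m n]) (use Q Pd X in auto)
  qed
  have g1: "resolvent A * cmat B = G" unfolding G_def R_def ..
  have g2: "resolvent A * cmat L = W" unfolding W_def R_def ..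
  have g3: "resolvent (P * A * Pd) * cmat (P * B) = Gh" unfolding Gh_def Rh_def Ah_def ..
  have g4: "cmat P - resolvent (P * A * Pd) * cmat (P * A * Pbd * Pb) = X" unfolding X_def Rh_def Ah_def Y_def ..
  show ?thesis unfolding g1 g2 g3 g4
  proof (intro ballI iffI)
    fix K :: "real poly fract mat" assume K: "K \<in> carrier_mat m n"
    {
      assume "output_rectifying_retrofit G W K"
      then obtain Q where Q: "Q \<in> carrier_mat m n" and RHQ: "RH_inf Q" and QW: "Q * W = 0\<^sub>m m p"
        and invM0: "invertible_mat (1\<^sub>m m + Q * G)" and KQ: "K = minv (1\<^sub>m m + Q * G) * Q"
        unfolding output_rectifying_retrofit_def using G W by auto
      define Qh where "Qh = Q * cmat Pd"
      have Qh: "Qh \<in> carrier_mat m r" unfolding Qh_def using Q Pd by simp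
      have RHQh: "RH_inf Qh" unfolding Qh_def using RHQ Q Pd by (intro RH_mult RH_cmat) auto
      have QQ: "Q = Qh * X" unfolding Qh_def by (rule Qfact[OF Q QW])
      have QG: "Q * G = Qh * Gh" unfolding QQ using E4 Qh by (simp add: assoc' dims)
      define M where "M = 1\<^sub>m m + Qh * Gh"
      have M: "M \<in> carrier_mat m m" unfolding M_def using Qh Gh by simp
      have invM: "invertible_mat M" using invM0 unfolding M_def QG .
      define Nn where "Nn = minv M"
      have Nn: "Nn \<in> carrier_mat m m" "M * Nn = 1\<^sub>m m" "Nn * M = 1\<^sub>m m"
        using minv_props[OF invM M] unfolding Nn_def by auto
      define Khat where "Khat = Nn * Qh"
      have Kh: "Khat \<in> carrier_mat m r" unfolding Khat_def using Nn Qh by simp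
      have KN: "K = Nn * Q" unfolding KQ QG M_def[symmetric] Nn_def ..
      have KX: "K = Khat * X" unfolding KN Khat_def
        by (subst QQ) (use Nn Qh X in \<open>simp add: assoc' dims\<close>)
      have KI: "Khat * (1\<^sub>m r + Gh * Qh) = Qh"
      proof -
        have "Khat * (1\<^sub>m r + Gh * Qh) = Nn * (M * Qh)" unfolding Khat_def M_def
          using Nn Qh Gh by (simp add: mad' amd' assoc' dims)
        also have "\<dots> = Qh" using Nn(3) Nn(1) M Qh by (simp flip: assoc' add: dims)
        finally show ?thesis .
      qed
      define S where "S = four_block_mat (1\<^sub>m r + Gh * Qh) (Gh + Gh * Qh * Gh) Qh (1\<^sub>m m + Qh * Gh)"
      define T where "T = four_block_mat (1\<^sub>m r) (- Gh) (- Khat) (1\<^sub>m m)"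
      have S: "S \<in> carrier_mat (r + m) (r + m)" unfolding S_def using Gh Qh by (intro four_block_carrier_mat) auto
      have T: "T \<in> carrier_mat (r + m) (r + m)" unfolding T_def using Gh Kh by (intro four_block_carrier_mat) auto
      have TS: "T * S = 1\<^sub>m (r + m)"
      proof -
        have "T * S = four_block_mat
           (1\<^sub>m r * (1\<^sub>m r + Gh * Qh) + - Gh * Qh) (1\<^sub>m r * (Gh + Gh * Qh * Gh) + - Gh * (1\<^sub>m m + Qh * Gh))
           (- Khat * (1\<^sub>m r + Gh * Qh) + 1\<^sub>m m * Qh) (- Khat * (Gh + Gh * Qh * Gh) + 1\<^sub>m m * (1\<^sub>m m + Qh * Gh))"
          unfolding T_def S_def using Gh Qh Kh by (intro mult_four_block_mat) auto
        also have "\<dots> = four_block_mat (1\<^sub>m r) (0\<^sub>m r m) (0\<^sub>m m r) (1\<^sub>m m)"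
        proof (rule cong_four_block_mat)
          show "1\<^sub>m r * (1\<^sub>m r + Gh * Qh) + - Gh * Qh = 1\<^sub>m r"
            using Gh Qh by (auto intro!: eq_matI)
          show "1\<^sub>m r * (Gh + Gh * Qh * Gh) + - Gh * (1\<^sub>m m + Qh * Gh) = 0\<^sub>m r m"
            using Gh Qh by (simp add: mad' assoc' dims) (auto intro!: eq_matI)
          have "Khat * (Gh + Gh * Qh * Gh) = Khat * (1\<^sub>m r + Gh * Qh) * Gh"
            using Kh Gh Qh by (simp add: mad' amd' assoc' dims)
          hence KG: "Khat * (Gh + Gh * Qh * Gh) = Qh * Gh" unfolding KI .
          have nK1: "- Khat * (1\<^sub>m r + Gh * Qh) = - (Khat * (1\<^sub>m r + Gh * Qh))"
            using Kh Gh Qh by (intro uminus_mult_left_mat) auto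
          have nK2: "- Khat * (Gh + Gh * Qh * Gh) = - (Khat * (Gh + Gh * Qh * Gh))"
            using Kh Gh Qh by (intro uminus_mult_left_mat) auto
          show "- Khat * (1\<^sub>m r + Gh * Qh) + 1\<^sub>m m * Qh = 0\<^sub>m m r"
            unfolding nK1 KI using Qh by (auto intro!: eq_matI)
          show "- Khat * (Gh + Gh * Qh * Gh) + 1\<^sub>m m * (1\<^sub>m m + Qh * Gh) = 1\<^sub>m m"
            unfolding nK2 KG using Qh Gh by (auto intro!: eq_matI)
        qed
        finally show ?thesis by simp
      qed
      have ST: "S * T = 1\<^sub>m (r + m)" by (rule mat_mult_left_right_inverse[OF T S TS])
      have invT: "invertible_mat T" by (rule invertible_by[OF T S TS ST])
      have mT: "minv T = S" by (rule minv_eq[OF T S TS ST])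
      have RHS: "RH_inf S" unfolding S_def using RHGh RHQh Gh Qh
        by (intro RH_four_block[of _ _ _ _ r r m m] RH_add RH_mult RH_one) auto
      have "stabilizing Gh Khat" unfolding stabilizing_def Let_def
        using Kh Gh invT mT RHS unfolding T_def by auto
      thus "\<exists>Khat. stabilizing Gh Khat \<and> K = Khat * X" using KX by blast
    }
    {
      assume "\<exists>Khat. stabilizing Gh Khat \<and> K = Khat * X"
      then obtain Khat where st: "stabilizing Gh Khat" and KX: "K = Khat * X" by blast
      define T where "T = four_block_mat (1\<^sub>m r) (- Gh) (- Khat) (1\<^sub>m m)"
      have Kh: "Khat \<in> carrier_mat m r" and invT: "invertible_mat T" and RHS: "RH_inf (minv T)"
        using st Gh unfolding stabilizing_def Let_def T_def by auto
      have T: "T \<in> carrier_mat (r + m) (r + m)" unfolding T_def using Gh Kh by (intro four_block_carrier_mat) auto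
      define S where "S = minv T"
      have S: "S \<in> carrier_mat (r + m) (r + m)" and TS: "T * S = 1\<^sub>m (r + m)" and ST: "S * T = 1\<^sub>m (r + m)"
        using minv_props[OF invT T] unfolding S_def by auto
      obtain S1 S2 S3 S4 where sb: "split_block S r r = (S1, S2, S3, S4)" by (cases "split_block S r r") auto
      have S1: "S1 \<in> carrier_mat r r" and S2: "S2 \<in> carrier_mat r m" and S3: "S3 \<in> carrier_mat m r"
        and S4: "S4 \<in> carrier_mat m m" and Seq: "S = four_block_mat S1 S2 S3 S4"
        using split_block[OF sb, of m m] S by auto
      have RHS3: "RH_inf S3" using RH_split(3)[OF RHS[folded S_def] sb] S by auto
      note dims2 = carrier_matD[OF S1] carrier_matD[OF S2] carrier_matD[OF S3] carrier_matD[OF S4] carrier_matD[OF Kh]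
      have "four_block_mat (1\<^sub>m r * S1 + - Gh * S3) (1\<^sub>m r * S2 + - Gh * S4)
           (- Khat * S1 + 1\<^sub>m m * S3) (- Khat * S2 + 1\<^sub>m m * S4) = T * S"
        unfolding T_def Seq using Gh Kh S1 S2 S3 S4 by (intro mult_four_block_mat[symmetric]) auto
      also have "\<dots> = four_block_mat (1\<^sub>m r) (0\<^sub>m r m) (0\<^sub>m m r) (1\<^sub>m m)" using TS by simp
      finally have TSb: "four_block_mat (1\<^sub>m r * S1 + - Gh * S3) (1\<^sub>m r * S2 + - Gh * S4)
           (- Khat * S1 + 1\<^sub>m m * S3) (- Khat * S2 + 1\<^sub>m m * S4) = four_block_mat (1\<^sub>m r) (0\<^sub>m r m) (0\<^sub>m m r) (1\<^sub>m m)" .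
      have b: "1\<^sub>m r * S2 + - Gh * S4 = 0\<^sub>m r m" and d: "- Khat * S2 + 1\<^sub>m m * S4 = 1\<^sub>m m"
        using four_block_eqD(2,4)[OF TSb, of r r m m] Gh Kh S1 S2 S3 S4 by simp_all
      have "four_block_mat (S1 * 1\<^sub>m r + S2 * - Khat) (S1 * - Gh + S2 * 1\<^sub>m m)
           (S3 * 1\<^sub>m r + S4 * - Khat) (S3 * - Gh + S4 * 1\<^sub>m m) = S * T"
        unfolding T_def Seq using Gh Kh S1 S2 S3 S4 by (intro mult_four_block_mat[symmetric]) auto
      also have "\<dots> = four_block_mat (1\<^sub>m r) (0\<^sub>m r m) (0\<^sub>m m r) (1\<^sub>m m)" using ST by simp
      finally have STb: "four_block_mat (S1 * 1\<^sub>m r + S2 * - Khat) (S1 * - Gh + S2 * 1\<^sub>m m)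
           (S3 * 1\<^sub>m r + S4 * - Khat) (S3 * - Gh + S4 * 1\<^sub>m m) = four_block_mat (1\<^sub>m r) (0\<^sub>m r m) (0\<^sub>m m r) (1\<^sub>m m)" .
      have g: "S3 * 1\<^sub>m r + S4 * - Khat = 0\<^sub>m m r" and h: "S3 * - Gh + S4 * 1\<^sub>m m = 1\<^sub>m m"
        using four_block_eqD(3,4)[OF STb, of r r m m] Gh Kh S1 S2 S3 S4 by simp_all
      have S2eq: "S2 = Gh * S4"
      proof (rule eq_matI)
        fix i j assume ij: "i < dim_row (Gh * S4)" "j < dim_col (Gh * S4)"
        have "(1\<^sub>m r * S2 + - Gh * S4) $$ (i,j) = 0\<^sub>m r m $$ (i,j)" by (simp only: b)
        thus "S2 $$ (i,j) = (Gh * S4) $$ (i,j)" using ij Gh S2 S4 by simp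
      qed (use Gh S2 S4 in auto)
      have S3eq: "S3 = S4 * Khat"
      proof (rule eq_matI)
        fix i j assume ij: "i < dim_row (S4 * Khat)" "j < dim_col (S4 * Khat)"
        have "(S3 * 1\<^sub>m r + S4 * - Khat) $$ (i,j) = 0\<^sub>m m r $$ (i,j)" by (simp only: g)
        thus "S3 $$ (i,j) = (S4 * Khat) $$ (i,j)" using ij Kh S3 S4 by simp
      qed (use Kh S3 S4 in auto)
      have S4eq: "S4 = 1\<^sub>m m + S3 * Gh"
      proof (rule eq_matI)
        fix i j assume ij: "i < dim_row (1\<^sub>m m + S3 * Gh)" "j < dim_col (1\<^sub>m m + S3 * Gh)"
        have "(S3 * - Gh + S4 * 1\<^sub>m m) $$ (i,j) = 1\<^sub>m m $$ (i,j)" by (simp only: h)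
        hence "- (S3 * Gh) $$ (i,j) + S4 $$ (i,j) = 1\<^sub>m m $$ (i,j)" using ij Gh S3 S4 by simp
        thus "S4 $$ (i,j) = (1\<^sub>m m + S3 * Gh) $$ (i,j)" using ij Gh S3 S4
          by (simp add: algebra_simps)
      qed (use Gh S3 S4 in auto)
      have d': "S4 - Khat * S2 = 1\<^sub>m m"
      proof (rule eq_matI)
        fix i j assume ij: "i < dim_row (1\<^sub>m m)" "j < dim_col (1\<^sub>m m)"
        have "(- Khat * S2 + 1\<^sub>m m * S4) $$ (i,j) = 1\<^sub>m m $$ (i,j)" by (simp only: d)
        thus "(S4 - Khat * S2) $$ (i,j) = 1\<^sub>m m $$ (i,j)" using ij Kh S2 S4 by simp
      qed (use Kh S2 S4 in auto)
      define Zm where "Zm = 1\<^sub>m m - Khat * Gh"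
      have Zm: "Zm \<in> carrier_mat m m" unfolding Zm_def using Kh Gh by (intro minus_carrier_mat) simp
      have SZ: "S4 * Zm = 1\<^sub>m m"
      proof -
        have "S4 * Zm = S4 - S4 * Khat * Gh" unfolding Zm_def using S4 Kh Gh by (simp add: mmd' assoc' dims)
        also have "\<dots> = S4 - S3 * Gh" unfolding S3eq ..
        also have "\<dots> = 1\<^sub>m m" by (subst S4eq) (use S3 Gh in \<open>auto intro!: eq_matI\<close>)
        finally show ?thesis .
      qed
      have ZS: "Zm * S4 = 1\<^sub>m m"
      proof -
        have "Zm * S4 = S4 - Khat * (Gh * S4)" unfolding Zm_def using S4 Kh Gh by (simp add: smd' assoc' dims)
        also have "\<dots> = 1\<^sub>m m" unfolding S2eq[symmetric] by (rule d')
        finally show ?thesis .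
      qed
      define Q where "Q = S3 * X"
      have Q: "Q \<in> carrier_mat m n" unfolding Q_def using S3 X by simp
      have RHQ: "RH_inf Q" unfolding Q_def using RHS3 RHX S3 X by (intro RH_mult) auto
      have QW: "Q * W = 0\<^sub>m m p" unfolding Q_def using S3 E5 by (simp add: assoc' dims)
      have QG: "1\<^sub>m m + Q * G = S4" unfolding Q_def S4eq using S3 E4 by (simp add: assoc' dims)
      have inv4: "invertible_mat S4" by (rule invertible_by[OF S4 Zm SZ ZS])
      have m4: "minv S4 = Zm" by (rule minv_eq[OF S4 Zm SZ ZS])
      have "Zm * Q = Zm * S4 * Khat * X" unfolding Q_def S3eq using Zm S4 Kh X by (simp add: assoc' dims)
      also have "\<dots> = K" unfolding ZS KX using Kh by simp
      finally have KZ: "K = minv (1\<^sub>m m + Q * G) * Q" unfolding QG m4 by simp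
      show "output_rectifying_retrofit G W K" unfolding output_rectifying_retrofit_def
        using Q RHQ QW inv4 KZ G W QG by (intro exI[of _ Q]) auto
    }
  qed
qed

end
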